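(* Assume $\mathrm{recc}(C)\subseteq\mathrm{recc}(P^B)$. Let $D\subseteq N_1\cup N_2$. If $M_D=\emptyset$, then $\mathrm{cl}\,\mathrm{conv}(P^B\setminus G_D^C)=P^B$.
   Context: Let $A\in\mathbb{R}^{m\times n}$ have full row rank, $b\in\mathbb{R}^m$, and $P=\{x\in\mathbb{R}^n_+:Ax=b\}$. Let $C\subseteq\mathbb{R}^n$ be an open convex set. Fix a basis $B$ of $P$ with nonbasic set $N=\{1,\dots,n\}\setminus B$. Write $P=\{x:x_i=\bar b_i-\sum_{j\in N}\bar a_{ij}x_j\ (i\in B),\ x\ge0\}$ with $\bar b\ge0$. The basic solution $\bar x$ has $\bar x_i=\bar b_i$ ($i\in B$) and $0$ ($i\in N$). $P^B$ is obtained by dropping $x_i\ge0$ for $i\in B$. For $j\in N$, $\bar r^j$ has $\bar r^j_k=-\bar a_{kj}$ ($k\in B$), $\bar r^j_j=1$, and $0$ otherwise. Thus $P^B=\{\bar x+\sum_{j\in N}x_j\bar r^j:x_j\ge0\}$. It is assumed that $\bar x\notin\mathrm{cl}(C)$. For $j\in N$, $\alpha_j=\inf\{\lambda\ge0:\bar x+\lambda\bar r^j\in C\}$ and $\beta_j=\sup\{\lambda\ge0:\bar x+\lambda\bar r^j\in C\}$, with $\alpha_j=+\infty$, $\beta_j=-\infty$ if the halfline misses $C$. Define - $N_1=\{j:\alpha_j\in(0,\infty),\beta_j=+\infty\}$; - $N_2=\{j:\alpha_j\in(0,\infty),\beta_j\in(\alpha_j,\infty)\}$. For a set $K$, $\mathrm{recc}(K)=\{d:x+\lambda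 d\in K\ \forall x\in K,\lambda\ge0\}$. $G_D^C=\{\bar x\}+\mathrm{conv}\big(\bigcup_{j\in D}\{\lambda\bar r^j:\lambda>\alpha_j\}\big)+\mathrm{recc}(C)$. For $(i,j)\in D\times(N\setminus D)$, $\gamma_{ij}=\sup\{\gamma\ge0:\alpha_i\bar r^i+\gamma\bar r^j\in\mathrm{recc}(G_D^C)\}$. Let $M_D=\{i\in D:\gamma_{ij}>0\ \forall j\in N\setminus D\}$. Here $\mathrm{cl}\,\mathrm{conv}$ is the closure of the convex hull. *)

theory Defs
  imports "HOL-Analysis.Analysis"
begin

text \<open>Setting: A is an m x n real matrix (rows indexed by 'm, columns by 'n),
  b a right-hand side, B a set of column indices (the basis), N = UNIV - B.\<close>

definition is_basis :: "real^'n^'m \<Rightarrow> 'n set \<Rightarrow> bool" where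
  "is_basis A B \<longleftrightarrow> card B = CARD('m) \<and> inj_on (\<lambda>j. column j A) B
      \<and> independent ((\<lambda>j. column j A) ` B)"

definition polyP :: "real^'n^'m \<Rightarrow> real^'m \<Rightarrow> (real^'n) set" where
  "polyP A b = {x. A *v x = b \<and> (\<forall>i. 0 \<le> x $ i)}"

definition polyPB :: "real^'n^'m \<Rightarrow> real^'m \<Rightarrow> 'n set \<Rightarrow> (real^'n) set" where
  "polyPB A b B = {x. A *v x = b \<and> (\<forall>j. j \<notin> B \<longrightarrow> 0 \<le> x $ j)}"

definition basic_sol :: "real^'n^'m \<Rightarrow> real^'m \<Rightarrow> 'n set \<Rightarrow> real^'n" where
  "basic_sol A b B = (THE x. A *v x = b \<and> (\<forall>j. j \<notin> B \<longrightarrow> x $ j = 0))"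

text \<open>Ray r^j for nonbasic j: r_j = 1, r_k = 0 for other nonbasic k, and A r = 0
  (equivalently r_k = - abar_kj for basic k).\<close>
definition basic_ray :: "real^'n^'m \<Rightarrow> 'n set \<Rightarrow> 'n \<Rightarrow> real^'n" where
  "basic_ray A B j = (THE r. A *v r = 0 \<and> r $ j = 1 \<and> (\<forall>k. k \<notin> B \<and> k \<noteq> j \<longrightarrow> r $ k = 0))"

definition recc :: "('a::real_vector) set \<Rightarrow> 'a set" where
  "recc K = {d. \<forall>x\<in>K. \<forall>t::real. t \<ge> 0 \<longrightarrow> x + t *\<^sub>R d \<in> K}"

text \<open>alpha_j and beta_j as extended reals (Inf {} = +inf, Sup {} = -inf).\<close>
definition alpha :: "real^'n \<Rightarrow> real^'n \<Rightarrow> (real^'n) set \<Rightarrow> ereal" where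
  "alpha xbar r C = Inf (ereal ` {t. t \<ge> 0 \<and> xbar + t *\<^sub>R r \<in> C})"

definition beta :: "real^'n \<Rightarrow> real^'n \<Rightarrow> (real^'n) set \<Rightarrow> ereal" where
  "beta xbar r C = Sup (ereal ` {t. t \<ge> 0 \<and> xbar + t *\<^sub>R r \<in> C})"

definition N1 :: "real^'n^'m \<Rightarrow> real^'m \<Rightarrow> 'n set \<Rightarrow> (real^'n) set \<Rightarrow> 'n set" where
  "N1 A b B C = {j. j \<notin> B \<and>
     (let a = alpha (basic_sol A b B) (basic_ray A B j) C;
          be = beta (basic_sol A b B) (basic_ray A B j) C
      in 0 < a \<and> a < \<infinity> \<and> be = \<infinity>)}"

definition N2 :: "real^'n^'m \<Rightarrow> real^'m \<Rightarrow> 'n set \<Rightarrow> (real^'n) set \<Rightarrow> 'n set" where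
  "N2 A b B C = {j. j \<notin> B \<and>
     (let a = alpha (basic_sol A b B) (basic_ray A B j) C;
          be = beta (basic_sol A b B) (basic_ray A B j) C
      in 0 < a \<and> a < \<infinity> \<and> a < be \<and> be < \<infinity>)}"

definition GDC :: "real^'n^'m \<Rightarrow> real^'m \<Rightarrow> 'n set \<Rightarrow> (real^'n) set \<Rightarrow> 'n set \<Rightarrow> (real^'n) set" where
  "GDC A b B C D =
     {basic_sol A b B + c + e | c e.
        c \<in> convex hull (\<Union>j\<in>D. {t *\<^sub>R basic_ray A B j | t.
               alpha (basic_sol A b B) (basic_ray A B j) C < ereal t})
        \<and> e \<in> recc C}"

text \<open>gamma_ij as an extended real supremum (-inf if the set is empty, +inf if unbounded).\<close>
definition gamma :: "real^'n^'m \<Rightarrow> real^'m \<Rightarrow> 'n set \<Rightarrow> (real^'n) set \<Rightarrow> 'n set \<Rightarrow> 'n \<Rightarrow> 'n \<Rightarrow> ereal" where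
  "gamma A b B C D i j = Sup (ereal ` {g. g \<ge> 0 \<and>
     real_of_ereal (alpha (basic_sol A b B) (basic_ray A B i) C) *\<^sub>R basic_ray A B i
       + g *\<^sub>R basic_ray A B j \<in> recc (GDC A b B C D)})"

definition MD :: "real^'n^'m \<Rightarrow> real^'m \<Rightarrow> 'n set \<Rightarrow> (real^'n) set \<Rightarrow> 'n set \<Rightarrow> 'n set" where
  "MD A b B C D = {i \<in> D. \<forall>j. j \<notin> B \<and> j \<notin> D \<longrightarrow> 0 < gamma A b B C D i j}"

end

theory Submission
  imports Defs
begin

lemma basis_unique:
  fixes A :: "real^'n^'m"
  assumes "is_basis A B" "A *v z = 0" "\<forall>k. k \<notin> B \<longrightarrow> z $ k = 0"
  shows "z = 0"
proof (rule ccontr)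
  assume nz: "z \<noteq> 0"
  let ?c = "\<lambda>j. column j A"
  have inj: "inj_on ?c B" and ind: "independent (?c ` B)" using assms(1) by (auto simp: is_basis_def)
  have "A *v z = (\<Sum>i\<in>UNIV. z$i *\<^sub>R ?c i)" by (simp add: matrix_mult_sum scalar_mult_eq_scaleR)
  also have "\<dots> = (\<Sum>i\<in>B. z$i *\<^sub>R ?c i)"
    using assms(3) by (intro sum.mono_neutral_right) auto
  also have "\<dots> = (\<Sum>v\<in>?c ` B. z $ (inv_into B ?c v) *\<^sub>R v)"
    using inj by (simp add: sum.reindex) (intro sum.cong refl, metis inv_into_f_f)
  finally have s0: "(\<Sum>v\<in>?c ` B. z $ (inv_into B ?c v) *\<^sub>R v) = 0" using assms(2) by simp
  from nz obtain k where k: "z $ k \<noteq> 0" by (auto simp: vec_eq_iff)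
  then have kB: "k \<in> B" using assms(3) by auto
  have ik: "inv_into B ?c (?c k) = k" using inj kB by (rule inv_into_f_f)
  have "dependent (?c ` B)"
    unfolding dependent_finite[OF finite_imageI[OF finite]]
    using s0 kB k inj by (intro exI[of _ "\<lambda>v. z $ (inv_into B ?c v)"]) (auto intro!: bexI[of _ k] simp: ik)
  with ind show False by simp
qed

lemma basis_solve:
  fixes A :: "real^'n^'m"
  assumes "is_basis A B"
  shows "\<exists>x. A *v x = v \<and> (\<forall>k. k \<notin> B \<longrightarrow> x $ k = 0)"
proof -
  let ?c = "\<lambda>j. column j A"
  have inj: "inj_on ?c B" and ind: "independent (?c ` B)" and cd: "card B = CARD('m)"
    using assms(1) by (auto simp: is_basis_def)
  have "card (?c ` B) = dim (UNIV :: (real^'m) set)"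
    using inj cd by (simp add: card_image dim_UNIV)
  then have "UNIV \<subseteq> span (?c ` B)" using card_eq_dim[of "?c ` B" UNIV] ind by auto
  then have "v \<in> span (?c ` B)" by auto
  then obtain u where u: "v = (\<Sum>w\<in>?c ` B. u w *\<^sub>R w)"
    using span_finite[OF finite_imageI[OF finite]] by blast
  define x where "x = (\<chi> k. if k \<in> B then u (?c k) else 0)"
  have "A *v x = (\<Sum>i\<in>UNIV. x$i *\<^sub>R ?c i)" by (simp add: matrix_mult_sum scalar_mult_eq_scaleR)
  also have "\<dots> = (\<Sum>i\<in>B. x$i *\<^sub>R ?c i)"
    by (intro sum.mono_neutral_right) (auto simp: x_def)
  also have "\<dots> = (\<Sum>i\<in>B. u (?c i) *\<^sub>R ?c i)" by (simp add: x_def)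
  also have "\<dots> = v" using u inj by (simp add: sum.reindex)
  finally show ?thesis by (intro exI[of _ x]) (auto simp: x_def)
qed

lemma sol_props:
  fixes A :: "real^'n^'m"
  assumes "is_basis A B"
  shows "A *v basic_sol A b B = b \<and> (\<forall>k. k \<notin> B \<longrightarrow> basic_sol A b B $ k = 0)"
proof -
  have "\<exists>!x. A *v x = b \<and> (\<forall>k. k \<notin> B \<longrightarrow> x $ k = 0)"
  proof (rule ex_ex1I)
    show "\<exists>x. A *v x = b \<and> (\<forall>k. k \<notin> B \<longrightarrow> x $ k = 0)" using basis_solve[OF assms] .
  next
    fix x y assume "A *v x = b \<and> (\<forall>k. k \<notin> B \<longrightarrow> x $ k = 0)" "A *v y = b \<and> (\<forall>k. k \<notin> B \<longrightarrow> y $ k = 0)"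
    then have "x - y = 0" by (intro basis_unique[OF assms]) (auto simp: matrix_vector_mult_diff_distrib)
    then show "x = y" by simp
  qed
  then show ?thesis unfolding basic_sol_def by (rule theI')
qed

lemma ray_props:
  fixes A :: "real^'n^'m"
  assumes "is_basis A B" "j \<notin> B"
  shows "A *v basic_ray A B j = 0 \<and> basic_ray A B j $ j = 1 \<and> (\<forall>k. k \<notin> B \<and> k \<noteq> j \<longrightarrow> basic_ray A B j $ k = 0)"
proof -
  have "\<exists>!r. A *v r = 0 \<and> r $ j = 1 \<and> (\<forall>k. k \<notin> B \<and> k \<noteq> j \<longrightarrow> r $ k = 0)"
  proof (rule ex_ex1I)
    obtain y where y: "A *v y = - column j A" "\<forall>k. k \<notin> B \<longrightarrow> y $ k = 0"
      using basis_solve[OF assms(1)] by blast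
    show "\<exists>r. A *v r = 0 \<and> r $ j = 1 \<and> (\<forall>k. k \<notin> B \<and> k \<noteq> j \<longrightarrow> r $ k = 0)"
      using y assms(2)
      by (intro exI[of _ "y + axis j 1"]) (auto simp: matrix_vector_right_distrib matrix_vector_mult_basis, auto simp: axis_def)
  next
    fix x y assume "A *v x = 0 \<and> x $ j = 1 \<and> (\<forall>k. k \<notin> B \<and> k \<noteq> j \<longrightarrow> x $ k = 0)"
      "A *v y = 0 \<and> y $ j = 1 \<and> (\<forall>k. k \<notin> B \<and> k \<noteq> j \<longrightarrow> y $ k = 0)"
    then have "x - y = 0"
      by (intro basis_unique[OF assms(1)]) (auto simp: matrix_vector_mult_diff_distrib, metis)
    then show "x = y" by simp
  qed
  then show ?thesis unfolding basic_ray_def by (rule theI')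
qed

lemma recc_scale:
  assumes "d \<in> recc K" "s \<ge> 0"
  shows "s *\<^sub>R d \<in> recc K"
  using assms unfolding recc_def by (auto simp: scaleR_scaleR)

theorem proposition4:
  fixes A :: "real^'n^'m" and b :: "real^'m" and B :: "'n set" and C :: "(real^'n) set"
    and D :: "'n set"
  assumes full_rank: "rank A = CARD('m)"
    and basis: "is_basis A B"
    and feasible: "basic_sol A b B \<in> polyP A b"
    and C_open: "open C" and C_convex: "convex C"
    and xbar_notin: "basic_sol A b B \<notin> closure C"
    and recc_sub: "recc C \<subseteq> recc (polyPB A b B)"
    and D_sub: "D \<subseteq> N1 A b B C \<union> N2 A b B C"
    and MD_empty: "MD A b B C D = {}"
  shows "closure (convex hull (polyPB A b B - GDC A b B C D)) = polyPB A b B"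
proof -
  define xb where "xb = basic_sol A b B"
  define r where "r = basic_ray A B"
  define G where "G = GDC A b B C D"
  define PB where "PB = polyPB A b B"
  have xb: "A *v xb = b" "\<And>k. k \<notin> B \<Longrightarrow> xb $ k = 0"
    using sol_props[OF basis] unfolding xb_def by auto
  have rp: "A *v r j = 0" "r j $ j = 1" "\<And>k. k \<notin> B \<Longrightarrow> k \<noteq> j \<Longrightarrow> r j $ k = 0" if "j \<notin> B" for j
    using ray_props[OF basis that] unfolding r_def by auto
  have rk: "r j $ k = (if k = j then 1 else 0)" if "j \<notin> B" "k \<notin> B" for j k
    using rp[OF that(1)] that by auto
  have Dprop: "k \<notin> B \<and> 0 < alpha xb (r k) C \<and> alpha xb (r k) C < \<infinity>" if "k \<in> D" for k
    using D_sub that unfolding N1_def N2_def Let_def xb_def r_def by auto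
  define a where "a k = real_of_ereal (alpha xb (r k) C)" for k
  have aD: "alpha xb (r k) C = ereal (a k)" "0 < a k" if "k \<in> D" for k
  proof -
    have h: "0 < alpha xb (r k) C" "alpha xb (r k) C < \<infinity>" using Dprop[OF that] by auto
    then obtain q where q: "alpha xb (r k) C = ereal q" by (cases "alpha xb (r k) C") auto
    then show "alpha xb (r k) C = ereal (a k)" "0 < a k" using h by (auto simp: a_def)
  qed
  define U where "U = (\<Union>j\<in>D. {t *\<^sub>R r j | t. alpha xb (r j) C < ereal t})"
  have Gdef: "G = {xb + c + e | c e. c \<in> convex hull U \<and> e \<in> recc C}"
    unfolding G_def GDC_def U_def xb_def r_def by simp
  have inPB: "x \<in> PB \<longleftrightarrow> A *v x = b \<and> (\<forall>j. j \<notin> B \<longrightarrow> 0 \<le> x $ j)" for x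
    unfolding PB_def polyPB_def by simp
  have xbPB: "xb \<in> PB" using xb by (simp add: inPB)
  have reccpos: "0 \<le> e $ k" if "e \<in> recc C" "k \<notin> B" for e k
  proof -
    have "e \<in> recc PB" using recc_sub that(1) unfolding PB_def by blast
    then have h: "\<forall>x\<in>PB. \<forall>t::real. t \<ge> 0 \<longrightarrow> x + t *\<^sub>R e \<in> PB" unfolding recc_def by blast
    have "xb + 1 *\<^sub>R e \<in> PB" using h xbPB zero_le_one by blast
    then have "0 \<le> (xb + 1 *\<^sub>R e) $ k" using that(2) unfolding inPB by blast
    then show ?thesis using xb(2)[OF that(2)] by simp
  qed
  define f where "f y = (\<Sum>k\<in>D. y $ k / a k)" for y :: "real^'n"
  have f_add: "f (x + y) = f x + f y" for x y
    unfolding f_def by (simp add: add_divide_distrib sum.distrib)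
  have f_scale: "f (u *\<^sub>R x) = u * f x" for u x
    unfolding f_def by (simp add: sum_distrib_left)
  have f_xb: "f xb = 0" unfolding f_def using Dprop xb(2) by (auto intro!: sum.neutral)
  have f_e: "f e \<ge> 0" if "e \<in> recc C" for e
    unfolding f_def using Dprop aD reccpos[OF that] by (auto intro!: sum_nonneg divide_nonneg_pos)
  have f_conv: "convex {y. 1 < f y}"
    unfolding convex_def
  proof (intro allI impI ballI, safe)
    fix x y and u v :: real assume h: "1 < f x" "1 < f y" "0 \<le> u" "0 \<le> v" "u + v = 1"
    have e: "f (u *\<^sub>R x + v *\<^sub>R y) = u * f x + v * f y" by (simp add: f_add f_scale)
    show "1 < f (u *\<^sub>R x + v *\<^sub>R y)"
    proof (cases "u > 0")
      case True
      have "u * 1 < u * f x" using True h by simp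
      moreover have "v * 1 \<le> v * f y" using h by (intro mult_left_mono) auto
      ultimately show ?thesis using e h by linarith
    next
      case False
      then show ?thesis using e h by auto
    qed
  qed
  have f_U: "1 < f u" if "u \<in> U" for u
  proof -
    from that obtain j t where j: "j \<in> D" "alpha xb (r j) C < ereal t" and u: "u = t *\<^sub>R r j"
      unfolding U_def by blast
    have jB: "j \<notin> B" using Dprop[OF j(1)] by auto
    have at: "a j < t" using j aD[OF j(1)] by simp
    have "f u = (\<Sum>k\<in>D. (if k = j then t / a j else 0))"
      unfolding f_def u using Dprop jB by (intro sum.cong refl) (auto simp: rk)
    also have "\<dots> = t / a j" using j(1) by simp
    finally show ?thesis using at aD[OF j(1)] by simp
  qed
  have f_hull: "1 < f c" if "c \<in> convex hull U" for c
    using hull_minimal[of U "{y. 1 < f y}" convex] f_conv f_U that by auto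
  have f_G: "1 < f y" if "y \<in> G" for y
  proof -
    from that obtain c e where "y = xb + c + e" "c \<in> convex hull U" "e \<in> recc C"
      unfolding Gdef by blast
    then show ?thesis using f_hull f_e f_xb by (simp add: f_add) (smt (verit) f_e f_hull)
  qed
  have Uscale: "s *\<^sub>R u \<in> U" if "u \<in> U" "s \<ge> 1" for u s
  proof -
    from that obtain j t where j: "j \<in> D" "alpha xb (r j) C < ereal t" and u: "u = t *\<^sub>R r j"
      unfolding U_def by blast
    have "a j < t" using j aD[OF j(1)] by simp
    then have "t \<le> s * t" using aD[OF j(1)] that(2) by (simp add: mult_le_cancel_right1)
    then have "alpha xb (r j) C < ereal (s * t)" using j(2) by (meson ereal_less_eq(3) less_le_trans)
    then show ?thesis unfolding U_def u using j(1) by (auto simp: scaleR_scaleR)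
  qed
  have Vscale: "s *\<^sub>R c \<in> convex hull U" if "c \<in> convex hull U" "s \<ge> 1" for c s
  proof -
    have "s *\<^sub>R c \<in> (\<lambda>x. s *\<^sub>R x) ` (convex hull U)" using that by blast
    also have "\<dots> = convex hull ((\<lambda>x. s *\<^sub>R x) ` U)" by (rule convex_hull_scaling[symmetric])
    also have "\<dots> \<subseteq> convex hull U" using Uscale that(2) by (intro hull_mono) auto
    finally show ?thesis .
  qed
  have Vadd: "c + l *\<^sub>R c0 \<in> convex hull U" if "c \<in> convex hull U" "c0 \<in> convex hull U" "l \<ge> 0" for c c0 l
  proof (cases "l = 0")
    case True then show ?thesis using that by simp
  next
    case False
    define th where "th = min l (1/2)"
    have th: "0 < th" "th \<le> l" "th \<le> 1/2" using False that(3) by (auto simp: th_def)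
    have s1: "(1 / (1 - th)) *\<^sub>R c \<in> convex hull U" using th by (intro Vscale that) auto
    have s2: "(l / th) *\<^sub>R c0 \<in> convex hull U" using th by (intro Vscale that) auto
    have "(1 - th) *\<^sub>R ((1 / (1 - th)) *\<^sub>R c) + th *\<^sub>R ((l / th) *\<^sub>R c0) \<in> convex hull U"
      using th by (intro convexD[OF convex_convex_hull s1 s2]) auto
    moreover have "(1 - th) *\<^sub>R ((1 / (1 - th)) *\<^sub>R c) + th *\<^sub>R ((l / th) *\<^sub>R c0) = c + l *\<^sub>R c0"
      using th by (simp add: scaleR_scaleR)
    ultimately show ?thesis by simp
  qed
  have reccadd: "e + s *\<^sub>R e0 \<in> recc C" if "e \<in> recc C" "e0 \<in> recc C" "s \<ge> 0" for e e0 s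
    unfolding recc_def
  proof (intro CollectI ballI allI impI)
    fix x and t :: real assume x: "x \<in> C" "0 \<le> t"
    have "x + t *\<^sub>R e \<in> C" using that x unfolding recc_def by blast
    moreover have "0 \<le> t * s" using that(3) x(2) by simp
    ultimately have "(x + t *\<^sub>R e) + (t * s) *\<^sub>R e0 \<in> C" using that(2) unfolding recc_def by blast
    then show "x + t *\<^sub>R (e + s *\<^sub>R e0) \<in> C" by (simp add: algebra_simps)
  qed
  have Gmem: "xb + c + e \<in> G" if "c \<in> convex hull U" "e \<in> recc C" for c e
    unfolding Gdef using that by blast
  have reccG: "d \<in> recc G" if "xb + d \<in> G" for d
  proof -
    from that obtain c0 e0 where d: "xb + d = xb + c0 + e0" "c0 \<in> convex hull U" "e0 \<in> recc C"
      unfolding Gdef by blast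
    show ?thesis unfolding recc_def
    proof (intro CollectI ballI allI impI)
      fix x and t :: real assume x: "x \<in> G" "0 \<le> t"
      from x(1) obtain c e where ce: "x = xb + c + e" "c \<in> convex hull U" "e \<in> recc C"
        unfolding Gdef by blast
      have "x + t *\<^sub>R d = xb + (c + t *\<^sub>R c0) + (e + t *\<^sub>R e0)"
        using d(1) ce(1) by (simp add: algebra_simps)
      moreover have "c + t *\<^sub>R c0 \<in> convex hull U" using Vadd ce d x by blast
      moreover have "e + t *\<^sub>R e0 \<in> recc C" using reccadd ce d x by blast
      ultimately show "x + t *\<^sub>R d \<in> G" by (metis Gmem)
    qed
  qed
  have rayPB: "xb + t *\<^sub>R r j \<in> PB" if "j \<notin> B" "t \<ge> 0" for j t
  proof -
    have "A *v (xb + t *\<^sub>R r j) = b"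
      using xb(1) rp(1)[OF that(1)] by (simp add: matrix_vector_right_distrib matrix_vector_mult_scaleR)
    moreover have "0 \<le> (xb + t *\<^sub>R r j) $ k" if "k \<notin> B" for k
      using xb(2)[OF that] rk[OF \<open>j \<notin> B\<close> that] \<open>t \<ge> 0\<close> by simp
    ultimately show ?thesis unfolding inPB by blast
  qed
  define S where "S = closure (convex hull (PB - G))"
  have subS: "PB - G \<subseteq> S" unfolding S_def by (rule order_trans[OF hull_subset closure_subset])
  have xbG: "xb \<notin> G"
  proof
    assume "xb \<in> G"
    then have "1 < f xb" by (rule f_G)
    then show False using f_xb by simp
  qed
  have xbS: "xb \<in> S" using subS xbPB xbG by blast
  have rayS: "xb + t *\<^sub>R r i \<in> S" if "i \<notin> B" "t \<ge> 0" for i t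
  proof (cases "i \<in> D")
    case False
    have "f (xb + t *\<^sub>R r i) = 0"
      unfolding f_def
    proof (intro sum.neutral ballI)
      fix k assume k: "k \<in> D"
      then have kB: "k \<notin> B" using Dprop by blast
      have "k \<noteq> i" using k False by blast
      then show "(xb + t *\<^sub>R r i) $ k / a k = 0" using xb(2)[OF kB] rk[OF that(1) kB] by simp
    qed
    then have "xb + t *\<^sub>R r i \<notin> G" using f_G[of "xb + t *\<^sub>R r i"] by linarith
    then show ?thesis using subS rayPB that by blast
  next
    case iD: True
    have "i \<notin> MD A b B C D" using MD_empty by simp
    then have "\<not> (\<forall>j. j \<notin> B \<and> j \<notin> D \<longrightarrow> 0 < gamma A b B C D i j)"
      using iD unfolding MD_def by simp
    then obtain j where j: "j \<notin> B" "j \<notin> D" "\<not> 0 < gamma A b B C D i j"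
      by blast
    have notG: "xb + T *\<^sub>R (a i *\<^sub>R r i + g *\<^sub>R r j) \<notin> G" if "g > 0" "T > 0" for g T
    proof
      assume "xb + T *\<^sub>R (a i *\<^sub>R r i + g *\<^sub>R r j) \<in> G"
      then have "T *\<^sub>R (a i *\<^sub>R r i + g *\<^sub>R r j) \<in> recc G" by (rule reccG)
      then have "(1/T) *\<^sub>R (T *\<^sub>R (a i *\<^sub>R r i + g *\<^sub>R r j)) \<in> recc G"
        by (rule recc_scale) (use that in auto)
      moreover have "(1/T) *\<^sub>R (T *\<^sub>R (a i *\<^sub>R r i + g *\<^sub>R r j)) = a i *\<^sub>R r i + g *\<^sub>R r j"
        using that by (simp add: scaleR_scaleR)
      ultimately have "a i *\<^sub>R r i + g *\<^sub>R r j \<in> recc G" by metis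
      then have "ereal g \<in> ereal ` {g. g \<ge> 0 \<and>
         real_of_ereal (alpha (basic_sol A b B) (basic_ray A B i) C) *\<^sub>R basic_ray A B i
         + g *\<^sub>R basic_ray A B j \<in> recc (GDC A b B C D)}"
        using that unfolding a_def xb_def r_def G_def by auto
      then have "ereal g \<le> gamma A b B C D i j" unfolding gamma_def by (rule Sup_upper)
      moreover have "(0::ereal) < ereal g" using that(1) by simp
      ultimately show False using j(3) by (meson less_le_trans)
    qed
    show ?thesis
    proof (cases "t = 0")
      case True then show ?thesis using xbS by simp
    next
      case False
      define T where "T = t / a i"
      have T: "T > 0" using False that aD[OF iD] by (simp add: T_def)
      define p where "p n = xb + T *\<^sub>R (a i *\<^sub>R r i + (1 / real (Suc n)) *\<^sub>R r j)" for n
      have pPB: "p n \<in> PB" for n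
      proof -
        have "0 \<le> p n $ k" if "k \<notin> B" for k
          using that xb(2)[OF that] rk[OF iD[THEN Dprop, THEN conjunct1] that] rk[OF j(1) that] T aD[OF iD]
          by (simp add: p_def)
        then show ?thesis using xb rp[OF j(1)] rp[OF Dprop[OF iD, THEN conjunct1]]
          by (simp add: inPB p_def matrix_vector_right_distrib matrix_vector_mult_scaleR)
      qed
      have pG: "p n \<notin> G" for n unfolding p_def using notG T by simp
      have "p \<longlonglongrightarrow> xb + T *\<^sub>R (a i *\<^sub>R r i + 0 *\<^sub>R r j)"
        unfolding p_def by (intro tendsto_intros LIMSEQ_inverse_real_of_nat[unfolded inverse_eq_divide])
      moreover have "xb + T *\<^sub>R (a i *\<^sub>R r i + 0 *\<^sub>R r j) = xb + t *\<^sub>R r i"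
      proof -
        have "T * a i = t" using aD[OF iD] by (simp add: T_def)
        then show ?thesis by (simp add: scaleR_scaleR)
      qed
      ultimately have lim: "p \<longlonglongrightarrow> xb + t *\<^sub>R r i" by metis
      have "\<forall>n. p n \<in> PB - G" using pPB pG by blast
      then have "xb + t *\<^sub>R r i \<in> closure (PB - G)"
        unfolding closure_sequential using lim by blast
      also have "\<dots> \<subseteq> S" unfolding S_def by (intro closure_mono hull_subset)
      finally show ?thesis .
    qed
  qed
  have closedPB: "closed PB"
  proof -
    have "PB = {x. A *v x = b} \<inter> (\<Inter>j\<in>-B. {x. 0 \<le> x $ j})" by (auto simp: inPB)
    moreover have "closed {x. A *v x = b}"
      by (intro closed_Collect_eq matrix_vector_mult_linear_continuous_on continuous_on_const)
    moreover have "closed {x::real^'n. 0 \<le> x $ j}" for j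
      by (intro closed_Collect_le continuous_intros)
    ultimately show ?thesis by auto
  qed
  have convexPB: "convex PB"
    unfolding convex_def
  proof (intro ballI allI impI)
    fix x y and u v :: real assume h: "x \<in> PB" "y \<in> PB" "0 \<le> u" "0 \<le> v" "u + v = 1"
    have "A *v (u *\<^sub>R x + v *\<^sub>R y) = (u + v) *\<^sub>R b" using h(1,2) unfolding inPB
      by (simp add: matrix_vector_right_distrib matrix_vector_mult_scaleR scaleR_left_distrib)
    moreover have "0 \<le> (u *\<^sub>R x + v *\<^sub>R y) $ j" if "j \<notin> B" for j
      using h that unfolding inPB by (simp add: add_nonneg_nonneg mult_nonneg_nonneg)
    ultimately show "u *\<^sub>R x + v *\<^sub>R y \<in> PB" using h(5) unfolding inPB by simp
  qed
  have "S \<subseteq> PB" unfolding S_def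
    by (intro closure_minimal closedPB hull_minimal convexPB) auto
  moreover have "PB \<subseteq> S"
  proof
    fix x assume x: "x \<in> PB"
    define N where "N = - B"
    have decomp: "x = xb + (\<Sum>j\<in>N. x $ j *\<^sub>R r j)"
    proof -
      have "x - xb - (\<Sum>j\<in>N. x $ j *\<^sub>R r j) = 0"
      proof (rule basis_unique[OF basis])
        show "A *v (x - xb - (\<Sum>j\<in>N. x $ j *\<^sub>R r j)) = 0"
          using x xb rp by (simp add: inPB N_def matrix_vector_mult_diff_distrib vec.sum matrix_vector_mult_scaleR)
        show "\<forall>k. k \<notin> B \<longrightarrow> (x - xb - (\<Sum>j\<in>N. x $ j *\<^sub>R r j)) $ k = 0"
        proof (intro allI impI)
          fix k assume k: "k \<notin> B"
          have "(\<Sum>j\<in>N. x $ j *\<^sub>R r j) $ k = (\<Sum>j\<in>N. if j = k then x $ j else 0)"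
            unfolding sum_component using k by (intro sum.cong refl) (auto simp: N_def rk)
          also have "\<dots> = x $ k" using k by (simp add: N_def)
          finally show "(x - xb - (\<Sum>j\<in>N. x $ j *\<^sub>R r j)) $ k = 0" using xb(2)[OF k] by simp
        qed
      qed
      then show ?thesis by (simp add: algebra_simps)
    qed
    show "x \<in> S"
    proof (cases "N = {}")
      case True then show ?thesis using decomp xbS by simp
    next
      case False
      define n where "n = real (card N)"
      have "finite N" by simp
      then have cN: "0 < card N" using False by (simp add: card_gt_0_iff)
      then have n: "n > 0" by (simp add: n_def)
      have "(\<Sum>j\<in>N. (1/n) *\<^sub>R (xb + (n * x $ j) *\<^sub>R r j)) \<in> S"
      proof (rule convex_sum)
        show "convex S" unfolding S_def by (intro convex_closure convex_convex_hull)
        show "(\<Sum>i\<in>N. 1 / n) = 1" using cN False by (simp add: n_def)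
        show "xb + (n * x $ j) *\<^sub>R r j \<in> S" if "j \<in> N" for j
          using that x n by (intro rayS) (auto simp: N_def inPB)
      qed (use n in auto)
      moreover have "(\<Sum>j\<in>N. (1/n) *\<^sub>R (xb + (n * x $ j) *\<^sub>R r j)) = xb + (\<Sum>j\<in>N. x $ j *\<^sub>R r j)"
      proof -
        have "(\<Sum>j\<in>N. (1/n) *\<^sub>R (xb + (n * x $ j) *\<^sub>R r j)) = (\<Sum>j\<in>N. (1/n) *\<^sub>R xb + x $ j *\<^sub>R r j)"
          using n by (intro sum.cong refl) (simp add: scaleR_add_right scaleR_scaleR)
        also have "\<dots> = (real (card N) * (1/n)) *\<^sub>R xb + (\<Sum>j\<in>N. x $ j *\<^sub>R r j)"
          by (simp only: sum.distrib sum_constant_scaleR scaleR_scaleR)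
        also have "real (card N) * (1/n) = 1" using cN False by (simp add: n_def)
        finally show ?thesis by simp
      qed
      then have "(\<Sum>j\<in>N. (1/n) *\<^sub>R (xb + (n * x $ j) *\<^sub>R r j)) = x" using decomp by metis
      ultimately show ?thesis by simp
    qed
  qed
  ultimately show ?thesis unfolding S_def PB_def G_def by simp
qed

end
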